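(* Let $G$ be a finite group which is a $2$-closed group. Then the center $Z(G)$ of $G$ is cyclic.
   Context: Permutations act on the right; $\alpha^g$ denotes the image of $\alpha$ under $g$. For a set $\Omega$ and $G\leq{\rm Sym}(\Omega)$, the $2$-closure of $G$ on $\Omega$ is $G^{(2),\Omega}=\{\theta\in{\rm Sym}(\Omega)\mid \forall \alpha,\beta\in\Omega\ \exists g\in G:\ \alpha^\theta=\alpha^g,\ \beta^\theta=\beta^g\}$. $G$ is called $2$-closed on $\Omega$ if $G=G^{(2),\Omega}$. An abstract group $G$ is called a $2$-closed group if $H=H^{(2),\Omega}$ for every set $\Omega$ and every subgroup $H\leq{\rm Sym}(\Omega)$ with $H\cong G$ (i.e. $G$ is $2$-closed in all of its faithful permutation representations). *)

theory Defs
  imports "HOL-Algebra.Algebra"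
begin

definition group_center :: "('a, 'b) monoid_scheme \<Rightarrow> 'a set" where
  "group_center G = {z \<in> carrier G. \<forall>g \<in> carrier G. z \<otimes>\<^bsub>G\<^esub> g = g \<otimes>\<^bsub>G\<^esub> z}"

(* 2-closure of H \<le> Sym(\<Omega>) on \<Omega>; permutations are the elements of Bij \<Omega>,
   and \<alpha>^g is written g \<alpha>. *)
definition two_closure :: "'c set \<Rightarrow> ('c \<Rightarrow> 'c) set \<Rightarrow> ('c \<Rightarrow> 'c) set" where
  "two_closure \<Omega> H = {\<theta> \<in> Bij \<Omega>. \<forall>\<alpha>\<in>\<Omega>. \<forall>\<beta>\<in>\<Omega>. \<exists>g\<in>H. \<theta> \<alpha> = g \<alpha> \<and> \<theta> \<beta> = g \<beta>}"

definition two_closed_on :: "'c set \<Rightarrow> ('c \<Rightarrow> 'c) set \<Rightarrow> bool" where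
  "two_closed_on \<Omega> H \<longleftrightarrow> H = two_closure \<Omega> H"

(* An abstract group G is 2-closed if every permutation group isomorphic to G is
   2-closed. Permutation domains are taken to be subsets of nat. *)
definition two_closed_group :: "('a, 'b) monoid_scheme \<Rightarrow> bool" where
  "two_closed_group G \<longleftrightarrow>
     (\<forall>(\<Omega>::nat set) H. subgroup H (BijGroup \<Omega>) \<and> G \<cong> (BijGroup \<Omega>)\<lparr>carrier := H\<rparr>
        \<longrightarrow> two_closed_on \<Omega> H)"

end

theory Submission
  imports Defs "HOL-Computational_Algebra.Primes"
begin

lemma not_two_closed_from_rep:
  fixes G :: "('a,'b) monoid_scheme" and XS :: "'c set" and \<phi> :: "'a \<Rightarrow> 'c \<Rightarrow> 'c"
  assumes grp: "group G" and finX: "finite XS"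
    and hom: "\<phi> \<in> hom G (BijGroup XS)" and inj: "inj_on \<phi> (carrier G)"
    and thB: "\<theta> \<in> Bij XS"
    and th2: "\<forall>\<alpha>\<in>XS. \<forall>\<beta>\<in>XS. \<exists>g\<in>carrier G. \<theta> \<alpha> = \<phi> g \<alpha> \<and> \<theta> \<beta> = \<phi> g \<beta>"
    and thn: "\<theta> \<notin> \<phi> ` carrier G"
  shows "\<not> two_closed_group G"
proof
  assume tc: "two_closed_group G"
  define \<Omega> where "\<Omega> = {0..<card XS}"
  obtain f where f: "bij_betw f XS \<Omega>" using ex_bij_betw_finite_nat[OF finX] \<Omega>_def by blast
  define fi where "fi = inv_into XS f"
  have fi: "bij_betw fi \<Omega> XS" using f fi_def bij_betw_inv_into by blast
  have ffi: "\<And>n. n \<in> \<Omega> \<Longrightarrow> f (fi n) = n" using f fi_def by (simp add: bij_betw_inv_into_right)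
  have fif: "\<And>x. x \<in> XS \<Longrightarrow> fi (f x) = x" using f fi_def by (simp add: bij_betw_inv_into_left)
  have fiO: "\<And>n. n \<in> \<Omega> \<Longrightarrow> fi n \<in> XS" using fi bij_betwE by blast
  have fX: "\<And>x. x \<in> XS \<Longrightarrow> f x \<in> \<Omega>" using f bij_betwE by blast
  define \<psi> where "\<psi> \<sigma> = (\<lambda>n\<in>\<Omega>. f (\<sigma> (fi n)))" for \<sigma> :: "'c \<Rightarrow> 'c"
  have psiB: "\<psi> \<sigma> \<in> Bij \<Omega>" if "\<sigma> \<in> Bij XS" for \<sigma>
  proof -
    have s: "bij_betw \<sigma> XS XS" using that by (simp add: Bij_def)
    have "bij_betw (f \<circ> \<sigma> \<circ> fi) \<Omega> \<Omega>"
      by (meson bij_betw_trans f fi s)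
    then have "bij_betw (\<psi> \<sigma>) \<Omega> \<Omega>"
      by (rule bij_betw_cong[THEN iffD1, rotated]) (simp add: \<psi>_def)
    then show ?thesis by (simp add: Bij_def \<psi>_def)
  qed
  have psicomp: "\<psi> (compose XS \<sigma> \<tau>) = compose \<Omega> (\<psi> \<sigma>) (\<psi> \<tau>)" if "\<sigma> \<in> Bij XS" "\<tau> \<in> Bij XS" for \<sigma> \<tau>
  proof -
    have "\<tau> (fi n) \<in> XS" if "n \<in> \<Omega>" for n using \<open>\<tau> \<in> Bij XS\<close> fiO[OF that] Bij_imp_funcset by blast
    then show ?thesis
      by (auto simp: \<psi>_def compose_def fun_eq_iff fiO fif fX)
  qed
  have psiinj: "\<sigma> = \<tau>" if "\<sigma> \<in> Bij XS" "\<tau> \<in> Bij XS" "\<psi> \<sigma> = \<psi> \<tau>" for \<sigma> \<tau>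
  proof (rule extensionalityI)
    show "\<sigma> \<in> extensional XS" "\<tau> \<in> extensional XS" using that by (auto simp: Bij_def)
    fix x assume x: "x \<in> XS"
    have "\<psi> \<sigma> (f x) = \<psi> \<tau> (f x)" using that by simp
    then have "f (\<sigma> x) = f (\<tau> x)" using x by (simp add: \<psi>_def fX fif)
    moreover have "\<sigma> x \<in> XS" "\<tau> x \<in> XS" using that x Bij_imp_funcset by blast+
    ultimately show "\<sigma> x = \<tau> x" using f by (metis bij_betw_def inj_onD)
  qed
  have phiB: "\<And>g. g \<in> carrier G \<Longrightarrow> \<phi> g \<in> Bij XS" using hom by (auto simp: hom_def BijGroup_def)
  have phimul: "\<And>g h. g \<in> carrier G \<Longrightarrow> h \<in> carrier G \<Longrightarrow> \<phi> (g \<otimes>\<^bsub>G\<^esub> h) = compose XS (\<phi> g) (\<phi> h)"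
    using hom phiB by (auto simp: hom_def BijGroup_def)
  define h where "h = \<psi> \<circ> \<phi>"
  define H where "H = h ` carrier G"
  have hhom: "h \<in> hom G (BijGroup \<Omega>)"
    by (auto simp: hom_def BijGroup_def h_def psiB phiB phimul psicomp monoid.m_closed[OF group.is_monoid[OF grp]])
  have gh: "group_hom G (BijGroup \<Omega>) h"
    by (simp add: group_BijGroup grp group_hom.intro group_hom_axioms.intro hhom)
  have sub: "subgroup H (BijGroup \<Omega>)" unfolding H_def by (rule group_hom.img_is_subgroup[OF gh])
  have hinj: "inj_on h (carrier G)"
    using inj psiinj phiB by (auto simp: inj_on_def h_def)
  have iso: "h \<in> iso G ((BijGroup \<Omega>)\<lparr>carrier := H\<rparr>)"
    using hhom hinj by (auto simp: iso_def hom_def H_def bij_betw_def)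
  have "G \<cong> (BijGroup \<Omega>)\<lparr>carrier := H\<rparr>" using iso by (rule is_isoI)
  with tc sub have eq: "H = two_closure \<Omega> H" unfolding two_closed_group_def two_closed_on_def by blast
  have "\<psi> \<theta> \<in> two_closure \<Omega> H"
    unfolding two_closure_def
  proof (intro CollectI conjI ballI)
    show "\<psi> \<theta> \<in> Bij \<Omega>" by (rule psiB[OF thB])
    fix \<alpha> \<beta> assume a: "\<alpha> \<in> \<Omega>" and b: "\<beta> \<in> \<Omega>"
    obtain g where g: "g \<in> carrier G" "\<theta> (fi \<alpha>) = \<phi> g (fi \<alpha>)" "\<theta> (fi \<beta>) = \<phi> g (fi \<beta>)"
      using th2 fiO a b by blast
    show "\<exists>g\<in>H. \<psi> \<theta> \<alpha> = g \<alpha> \<and> \<psi> \<theta> \<beta> = g \<beta>"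
      by (rule bexI[of _ "h g"]) (use g a b in \<open>auto simp: H_def h_def \<psi>_def\<close>)
  qed
  moreover have "\<psi> \<theta> \<notin> H"
  proof
    assume "\<psi> \<theta> \<in> H"
    then obtain g where g: "g \<in> carrier G" "\<psi> \<theta> = \<psi> (\<phi> g)" by (auto simp: H_def h_def)
    then have "\<theta> = \<phi> g" using psiinj thB phiB by blast
    with g thn show False by blast
  qed
  ultimately show False using eq by blast
qed


lemma (in group) center_subgroup: "subgroup (group_center G) G"
proof
  show "group_center G \<subseteq> carrier G" by (auto simp: group_center_def)
  show "\<one> \<in> group_center G" by (auto simp: group_center_def)
  fix x y assume x: "x \<in> group_center G" and y: "y \<in> group_center G"
  show "x \<otimes> y \<in> group_center G"
  proof -
    have xc: "x \<in> carrier G" and xg: "\<forall>g\<in>carrier G. x \<otimes> g = g \<otimes> x" using x by (auto simp: group_center_def)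
    have yc: "y \<in> carrier G" and yg: "\<forall>g\<in>carrier G. y \<otimes> g = g \<otimes> y" using y by (auto simp: group_center_def)
    have "x \<otimes> y \<otimes> g = g \<otimes> (x \<otimes> y)" if g: "g \<in> carrier G" for g
    proof -
      have "x \<otimes> y \<otimes> g = x \<otimes> (g \<otimes> y)" using xc yc g yg by (simp add: m_assoc)
      also have "\<dots> = (x \<otimes> g) \<otimes> y" using xc yc g by (simp add: m_assoc)
      also have "\<dots> = g \<otimes> (x \<otimes> y)" using xc yc g xg by (simp add: m_assoc)
      finally show ?thesis .
    qed
    then show ?thesis using xc yc by (auto simp: group_center_def)
  qed
  show "inv x \<in> group_center G"
  proof -
    have xc: "x \<in> carrier G" and xg: "\<forall>g\<in>carrier G. x \<otimes> g = g \<otimes> x" using x by (auto simp: group_center_def)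
    have "inv x \<otimes> g = g \<otimes> inv x" if g: "g \<in> carrier G" for g
    proof -
      have "x \<otimes> g = g \<otimes> x" using xg g by blast
      have "inv x \<otimes> g = inv x \<otimes> (g \<otimes> x) \<otimes> inv x" using xc g by (simp add: m_assoc)
      also have "\<dots> = inv x \<otimes> (x \<otimes> g) \<otimes> inv x" using \<open>x \<otimes> g = g \<otimes> x\<close> by simp
      also have "\<dots> = g \<otimes> inv x" using xc g by (simp add: m_assoc[symmetric])
      finally show ?thesis .
    qed
    then show ?thesis using xc by (auto simp: group_center_def)
  qed
qed

lemma (in group) center_pow:
  assumes "c \<in> group_center G" shows "c [^] (i::int) \<in> group_center G"
proof -
  have cc: "c \<in> carrier G" using assms by (auto simp: group_center_def)
  have "carrier (subgroup_generated G {c}) \<subseteq> group_center G"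
    using subgroup_generated_minimal[OF center_subgroup] assms by blast
  then show ?thesis using carrier_subgroup_generated_by_singleton[OF cc] by blast
qed

lemma (in group) center_comm: "c \<in> group_center G \<Longrightarrow> y \<in> carrier G \<Longrightarrow> c \<otimes> y = y \<otimes> c"
  by (auto simp: group_center_def)

lemma (in group) lcos_eqD:
  assumes K: "subgroup K G" and g: "g \<in> carrier G" and h: "h \<in> carrier G" and eq: "g <# K = h <# K"
  shows "inv h \<otimes> g \<in> K"
proof -
  have "g \<in> g <# K" using K g by (auto simp: l_coset_def intro!: bexI[of _ \<one>] dest: subgroup.one_closed)
  then obtain k where k: "k \<in> K" "g = h \<otimes> k" using eq by (auto simp: l_coset_def)
  then have "inv h \<otimes> g = k" using h K g by (simp add: subgroup.mem_carrier inv_solve_left m_assoc[symmetric])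
  with k show ?thesis by simp
qed

lemma (in group) lcos_fix:
  assumes K: "subgroup K G" and c: "c \<in> K" "c \<in> group_center G" and x: "x \<in> carrier G"
  shows "c <# (x <# K) = x <# K"
proof -
  have cc: "c \<in> carrier G" by (rule subgroup.mem_carrier[OF K c(1)])
  have Ks: "K \<subseteq> carrier G" by (rule subgroup.subset[OF K])
  have e1: "c <# (x <# K) = (c \<otimes> x) <# K" by (rule lcos_m_assoc[OF Ks cc x])
  have e2: "c \<otimes> x = x \<otimes> c" by (rule center_comm[OF c(2) x])
  have e3: "x <# (c <# K) = (x \<otimes> c) <# K" by (rule lcos_m_assoc[OF Ks x cc])
  have e4: "c <# K = K" by (rule coset_join3[OF cc K c(1)])
  show ?thesis unfolding e1 e2 e3[symmetric] e4 ..
qed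

lemma (in group) config_not_two_closed:
  assumes fin: "finite (carrier G)"
    and a: "a \<in> group_center G" and b: "b \<in> group_center G"
    and AB: "\<forall>(i::int) (j::int). a [^] i = b [^] j \<longrightarrow> b [^] j = \<one>"
    and aC: "\<forall>k::int. a \<noteq> (a \<otimes> b) [^] k"
  shows "\<not> two_closed_group G"
proof -
  have ac: "a \<in> carrier G" and bc: "b \<in> carrier G" using a b by (auto simp: group_center_def)
  have abz: "a \<otimes> b \<in> group_center G" by (rule subgroup.m_closed[OF center_subgroup a b])
  have abc: "a \<otimes> b \<in> carrier G" using ac bc by simp
  define A where "A = range (\<lambda>i::int. a [^] i)"
  define B where "B = range (\<lambda>i::int. b [^] i)"
  define C where "C = range (\<lambda>i::int. (a \<otimes> b) [^] i)"
  define K where "K i = (if i = (0::nat) then A else if i = 1 then B else C)" for i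
  have sA: "subgroup A G" unfolding A_def by (rule subgroup_of_powers[OF ac])
  have sB: "subgroup B G" unfolding B_def by (rule subgroup_of_powers[OF bc])
  have sC: "subgroup C G" unfolding C_def by (rule subgroup_of_powers[OF abc])
  have sK: "subgroup (K i) G" for i using sA sB sC by (simp add: K_def)
  have KS: "K i \<subseteq> carrier G" for i by (rule subgroup.subset[OF sK])
  define XS where "XS = (\<lambda>(i,x). (i, x <# K i)) ` ({0..<3::nat} \<times> carrier G)"
  have finXS: "finite XS" unfolding XS_def using fin by simp
  have mv: "(fst p, g <# snd p) \<in> XS" if p: "p \<in> XS" and g: "g \<in> carrier G" for p g
  proof -
    obtain i x where ix: "i < 3" "x \<in> carrier G" "p = (i, x <# K i)" using p by (auto simp: XS_def)
    have "g <# (x <# K i) = (g \<otimes> x) <# K i" using lcos_m_assoc[OF KS g ix(2)] .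
    then show ?thesis using ix g by (auto simp: XS_def intro!: image_eqI[of _ _ "(i, g \<otimes> x)"])
  qed
  have sndS: "snd p \<subseteq> carrier G" if "p \<in> XS" for p
    using that by (auto simp: XS_def l_coset_def KS[THEN subsetD])
  define \<rho> where "\<rho> t = (\<lambda>p\<in>XS. (fst p, t (fst p) <# snd p))" for t :: "nat \<Rightarrow> 'a"
  have rhoB: "\<rho> t \<in> Bij XS" if t: "\<And>i. t i \<in> carrier G" for t
  proof -
    have "bij_betw (\<rho> t) XS XS"
    proof (rule bij_betw_byWitness[where f' = "\<rho> (\<lambda>i. inv (t i))"])
      show "\<forall>p\<in>XS. \<rho> (\<lambda>i. inv t i) (\<rho> t p) = p"
        using mv t sndS by (auto simp: \<rho>_def lcos_m_assoc lcos_mult_one)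
      show "\<forall>p\<in>XS. \<rho> t (\<rho> (\<lambda>i. inv t i) p) = p"
        using mv t sndS by (auto simp: \<rho>_def lcos_m_assoc lcos_mult_one)
      show "\<rho> t ` XS \<subseteq> XS" using mv t by (auto simp: \<rho>_def)
      show "\<rho> (\<lambda>i. inv t i) ` XS \<subseteq> XS" using mv t by (auto simp: \<rho>_def)
    qed
    then show ?thesis by (simp add: Bij_def \<rho>_def)
  qed
  define \<phi> where "\<phi> g = \<rho> (\<lambda>_. g)" for g
  define \<theta> where "\<theta> = \<rho> (\<lambda>i. if i = 2 then a else \<one>)"
  have phiB: "\<phi> g \<in> Bij XS" if "g \<in> carrier G" for g using rhoB that by (simp add: \<phi>_def)
  have hom: "\<phi> \<in> hom G (BijGroup XS)"
  proof -
    have "\<phi> (g \<otimes> h) = compose XS (\<phi> g) (\<phi> h)" if g: "g \<in> carrier G" and h: "h \<in> carrier G" for g h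
      using mv g h sndS by (auto simp: \<phi>_def \<rho>_def compose_def fun_eq_iff lcos_m_assoc)
    then show ?thesis using phiB by (auto simp: hom_def BijGroup_def)
  qed
  have pt: "(i, K i) \<in> XS" if "i < 3" for i
    using that KS by (auto simp: XS_def lcos_mult_one intro!: image_eqI[of _ _ "(i, \<one>)"])
  have phiK: "\<phi> g (i, K i) = (i, g <# K i)" if "i < 3" for g i
    using pt[OF that] by (simp add: \<phi>_def \<rho>_def)
  have inAB: "g = \<one>" if "g \<in> A" "g \<in> B" for g
  proof -
    from that(1) obtain i :: int where i: "g = a [^] i" unfolding A_def by blast
    from that(2) obtain j :: int where j: "g = b [^] j" unfolding B_def by blast
    have "a [^] i = b [^] j" using i j by simp
    then have "b [^] j = \<one>" by (rule AB[rule_format])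
    then show ?thesis using j by simp
  qed
  have inj: "inj_on \<phi> (carrier G)"
  proof (rule inj_onI)
    fix g h assume g: "g \<in> carrier G" and h: "h \<in> carrier G" and eq: "\<phi> g = \<phi> h"
    have "g <# K 0 = h <# K 0" using phiK[of 0 g] phiK[of 0 h] eq by simp
    then have "inv h \<otimes> g \<in> K 0" by (rule lcos_eqD[OF sK g h])
    then have 1: "inv h \<otimes> g \<in> A" by (simp add: K_def)
    have "g <# K 1 = h <# K 1" using phiK[of 1 g] phiK[of 1 h] eq by simp
    then have "inv h \<otimes> g \<in> K 1" by (rule lcos_eqD[OF sK g h])
    then have 2: "inv h \<otimes> g \<in> B" by (simp add: K_def)
    have "inv h \<otimes> g = \<one>" using inAB 1 2 by blast
    then show "g = h" using g h by (metis inv_equality inv_inv inv_closed)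
  qed
  have thB: "\<theta> \<in> Bij XS" unfolding \<theta>_def by (rule rhoB) (simp add: ac)
  have thn: "\<theta> \<notin> \<phi> ` carrier G"
  proof
    assume "\<theta> \<in> \<phi> ` carrier G"
    then obtain g where g: "g \<in> carrier G" "\<theta> = \<phi> g" by blast
    have th: "\<theta> (i, K i) = (i, (if i = 2 then a else \<one>) <# K i)" if "i < 3" for i
      using pt[OF that] by (simp add: \<theta>_def \<rho>_def)
    have "g <# K 0 = \<one> <# K 0" using th[of 0] phiK[of 0 g] g by simp
    then have "inv \<one> \<otimes> g \<in> K 0" by (rule lcos_eqD[OF sK g(1) one_closed])
    then have "inv \<one> \<otimes> g \<in> A" by (simp add: K_def)
    then have 1: "g \<in> A" using g by simp
    have "g <# K 1 = \<one> <# K 1" using th[of 1] phiK[of 1 g] g by simp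
    then have "inv \<one> \<otimes> g \<in> K 1" by (rule lcos_eqD[OF sK g(1) one_closed])
    then have "inv \<one> \<otimes> g \<in> B" by (simp add: K_def)
    then have 2: "g \<in> B" using g by simp
    have g1: "g = \<one>" using inAB 1 2 by blast
    have "\<one> <# K 2 = a <# K 2" using th[of 2] phiK[of 2 g] g g1 by simp
    then have "inv a \<otimes> \<one> \<in> K 2" by (rule lcos_eqD[OF sK one_closed ac])
    then have "inv a \<otimes> \<one> \<in> C" by (simp add: K_def)
    then have "inv a \<in> C" using ac by simp
    then have "inv (inv a) \<in> C" by (rule subgroup.m_inv_closed[OF sC])
    then have "a \<in> C" using ac by simp
    then show False using aC by (auto simp: C_def)
  qed
  have th2: "\<forall>\<alpha>\<in>XS. \<forall>\<beta>\<in>XS. \<exists>g\<in>carrier G. \<theta> \<alpha> = \<phi> g \<alpha> \<and> \<theta> \<beta> = \<phi> g \<beta>"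
  proof (intro ballI)
    fix \<alpha> \<beta> assume al: "\<alpha> \<in> XS" and be: "\<beta> \<in> XS"
    have fst3: "fst p < 3" if "p \<in> XS" for p using that by (auto simp: XS_def)
    have thv: "\<theta> p = (fst p, (if fst p = 2 then a else \<one>) <# snd p)" if "p \<in> XS" for p
      using that by (simp add: \<theta>_def \<rho>_def)
    have phv: "\<phi> g p = (fst p, g <# snd p)" if "p \<in> XS" for p g
      using that by (simp add: \<phi>_def \<rho>_def)
    have fixK: "c <# snd p = snd p" if p: "p \<in> XS" and c: "c \<in> K (fst p)" "c \<in> group_center G" for p c
    proof -
      obtain i x where ix: "i < 3" "x \<in> carrier G" "p = (i, x <# K i)" using p by (auto simp: XS_def)
      then show ?thesis using lcos_fix[OF sK, of c "fst p" x] c by simp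
    qed
    have aA: "a \<in> A" unfolding A_def by (rule range_eqI[of _ _ 1]) (simp add: ac)
    have ibB: "inv b \<in> B" unfolding B_def by (rule range_eqI[of _ _ "-1"]) (simp add: bc int_pow_neg)
    have abC: "a \<otimes> b \<in> C" unfolding C_def by (rule range_eqI[of _ _ 1]) (simp add: abc)
    have ibz: "inv b \<in> group_center G" by (rule subgroup.m_inv_closed[OF center_subgroup b])
    have ok1: "\<theta> p = \<phi> \<one> p" if "p \<in> XS" "fst p \<noteq> 2" for p
      using that by (simp add: thv phv)
    have oka: "\<theta> p = \<phi> a p" if p: "p \<in> XS" "fst p \<noteq> 1" for p
    proof (cases "fst p = 2")
      case True then show ?thesis using p by (simp add: thv phv)
    next
      case False
      then have "fst p = 0" using p fst3 by fastforce
      then have "a <# snd p = snd p" using fixK[OF p(1)] aA a by (simp add: K_def)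
      then show ?thesis using p False by (simp add: thv phv lcos_mult_one sndS)
    qed
    have okb: "\<theta> p = \<phi> (inv b) p" if p: "p \<in> XS" "fst p \<noteq> 0" for p
    proof (cases "fst p = 2")
      case True
      have q: "(fst p, inv b <# snd p) \<in> XS" using mv p bc by simp
      have "(a \<otimes> b) <# (inv b <# snd p) = inv b <# snd p"
        using fixK[OF q] abC abz True by (simp add: K_def)
      moreover have "(a \<otimes> b) <# (inv b <# snd p) = a <# snd p"
        using sndS[OF p(1)] ac bc by (simp add: lcos_m_assoc m_assoc)
      ultimately show ?thesis using p True by (simp add: thv phv)
    next
      case False
      then have "fst p = 1" using p fst3 by fastforce
      then have "inv b <# snd p = snd p" using fixK[OF p(1)] ibB ibz by (simp add: K_def)
      then show ?thesis using p False by (simp add: thv phv lcos_mult_one sndS)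
    qed
    show "\<exists>g\<in>carrier G. \<theta> \<alpha> = \<phi> g \<alpha> \<and> \<theta> \<beta> = \<phi> g \<beta>"
    proof (cases "fst \<alpha> \<noteq> 2 \<and> fst \<beta> \<noteq> 2")
      case True then show ?thesis using ok1 al be by blast
    next
      case F1: False
      show ?thesis
      proof (cases "fst \<alpha> \<noteq> 1 \<and> fst \<beta> \<noteq> 1")
        case True then show ?thesis using oka al be ac by blast
      next
        case False
        then have "fst \<alpha> \<noteq> 0 \<and> fst \<beta> \<noteq> 0" using F1 by auto
        then show ?thesis using okb al be bc by blast
      qed
    qed
  qed
  show ?thesis
    by (rule not_two_closed_from_rep[OF is_group finXS hom inj thB th2 thn])
qed


lemma arith_key:
  fixes r n :: nat
  assumes r0: "r > 0" and n0: "n > 0" and nd: "\<not> r dvd n"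
    and H: "\<forall>q. Factorial_Ring.prime q \<longrightarrow> q dvd r \<longrightarrow> r dvd q * n"
  shows "\<exists>p. Factorial_Ring.prime p \<and> r = p * gcd r n \<and> coprime r (n div gcd r n)"
proof -
  define g where "g = gcd r n"
  have g0: "g > 0" using r0 by (simp add: g_def)
  define r' where "r' = r div g"
  define n' where "n' = n div g"
  have rr: "r = r' * g" by (simp add: r'_def g_def)
  have nn: "n = n' * g" by (simp add: n'_def g_def)
  have cop: "coprime r' n'" unfolding r'_def n'_def g_def using r0 by (intro div_gcd_coprime) simp
  have r'1: "r' \<noteq> 1"
  proof
    assume "r' = 1"
    then have "r = g" using rr by simp
    then have "r dvd n" unfolding g_def by (metis gcd_dvd2)
    then show False using nd by simp
  qed
  obtain p where p: "Factorial_Ring.prime p" "p dvd r'" using prime_factor_nat[OF r'1] by blast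
  have "p dvd r" using p rr by simp
  then have "r dvd p * n" using H p by blast
  then have "r' * g dvd (p * n') * g" using rr nn by (simp add: mult.assoc)
  then have "r' dvd p * n'" using g0 by simp
  then have "r' dvd p" using cop by (simp add: coprime_dvd_mult_left_iff)
  then have rp: "r' = p" using p(1) r'1 unfolding prime_nat_iff by blast
  have pn': "\<not> p dvd n'"
  proof
    assume "p dvd n'"
    then show False using coprime_common_divisor[OF cop[unfolded rp] dvd_refl] p(1) by (simp add: \<open>p dvd n'\<close>)
  qed
  have "coprime r n'"
  proof (rule ccontr)
    assume "\<not> coprime r n'"
    then obtain c where c: "c dvd r" "c dvd n'" "\<not> is_unit c" by (rule not_coprimeE)
    have "c \<noteq> 1" using c by auto
    then obtain q where q: "Factorial_Ring.prime q" "q dvd c" using prime_factor_nat by blast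
    have qr: "q dvd r" using dvd_trans[OF q(2) c(1)] .
    have qn: "q dvd n'" using dvd_trans[OF q(2) c(2)] .
    have "r dvd q * n" using H q qr by blast
    then have "p * g dvd (q * n') * g" using rr nn rp by (simp add: mult.assoc)
    then have "p dvd q * n'" using g0 by simp
    then have "p dvd q \<or> p dvd n'" using p prime_dvd_mult_iff by blast
    then show False
    proof
      assume "p dvd q"
      then have "p = q" using q(1) p(1) unfolding prime_nat_iff by (metis less_irrefl)
      then show False using pn' qn by simp
    qed (use pn' in simp)
  qed
  moreover have "r = p * g" using rr rp by simp
  ultimately show ?thesis using p(1) unfolding n'_def g_def by blast
qed

lemma (in group) ord_mult_coprime:
  assumes x: "x \<in> carrier G" and y: "y \<in> carrier G" and comm: "x \<otimes> y = y \<otimes> x"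
    and cop: "coprime (ord x) (ord y)"
  shows "ord (x \<otimes> y) = ord x * ord y"
proof -
  have "(x \<otimes> y) [^] n = \<one> \<longleftrightarrow> ord x * ord y dvd n" for n :: nat
  proof
    assume hyp: "(x \<otimes> y) [^] n = \<one>"
    have e: "x [^] n \<otimes> y [^] n = \<one>" using hyp pow_mult_distrib[OF comm x y] by simp
    define h where "h = x [^] n"
    have hc: "h \<in> carrier G" using x by (simp add: h_def)
    have yn: "y [^] n \<in> carrier G" using y by simp
    have hinv: "inv (y [^] n) = h" using inv_equality[OF e[folded h_def] yn hc] .
    have "h [^] ord x = x [^] (n * ord x)" using x by (simp add: h_def nat_pow_pow)
    also have "\<dots> = \<one>" using pow_eq_id[OF x] by simp
    finally have d1: "ord h dvd ord x" using pow_eq_id[OF hc] by simp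
    have "h [^] ord y = inv ((y [^] n) [^] ord y)" using hinv[symmetric] nat_pow_inv[OF yn] by simp
    also have "(y [^] n) [^] ord y = y [^] (n * ord y)" using y by (simp add: nat_pow_pow)
    also have "\<dots> = \<one>" using pow_eq_id[OF y] by simp
    finally have "h [^] ord y = \<one>" by simp
    then have d2: "ord h dvd ord y" using pow_eq_id[OF hc] by simp
    have "ord h = 1" using coprime_common_divisor_nat[OF cop d1 d2] .
    then have h1: "h = \<one>" using ord_eq_1[OF hc] by simp
    then have xn: "x [^] n = \<one>" by (simp add: h_def)
    then have yn1: "y [^] n = \<one>" using e y by simp
    show "ord x * ord y dvd n"
      using divides_mult[OF pow_eq_id[OF x, THEN iffD1, OF xn] pow_eq_id[OF y, THEN iffD1, OF yn1] cop] .
  next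
    assume "ord x * ord y dvd n"
    then have "ord x dvd n" "ord y dvd n" by (auto intro: dvd_mult_left dvd_mult_right)
    then have "x [^] n = \<one>" "y [^] n = \<one>" using pow_eq_id x y by auto
    then show "(x \<otimes> y) [^] n = \<one>" using pow_mult_distrib[OF comm x y] by simp
  qed
  then show ?thesis using ord_unique[of "x \<otimes> y"] x y by simp
qed

lemma (in group) center_pow_nat:
  assumes "c \<in> group_center G" shows "c [^] (k::nat) \<in> group_center G"
  using center_pow[OF assms, of "int k"] by (simp add: int_pow_int)

lemma (in group) center_carrier: "c \<in> group_center G \<Longrightarrow> c \<in> carrier G"
  by (simp add: group_center_def)

lemma (in group) max_ord_exp:
  assumes fin: "finite (carrier G)" and z: "z \<in> group_center G"
    and mx: "\<forall>y\<in>group_center G. ord y \<le> ord z" and w: "w \<in> group_center G"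
  shows "ord w dvd ord z"
  using w
proof (induction "ord w" arbitrary: w rule: less_induct)
  case less
  show ?case
  proof (rule ccontr)
    assume nd: "\<not> ord w dvd ord z"
    have wc: "w \<in> carrier G" using less.prems by (rule center_carrier)
    have zc: "z \<in> carrier G" using z by (rule center_carrier)
    have r0: "ord w > 0" using ord_ge_1[OF fin wc] by simp
    have n0: "ord z > 0" using ord_ge_1[OF fin zc] by simp
    have H: "\<forall>q. Factorial_Ring.prime q \<longrightarrow> q dvd ord w \<longrightarrow> ord w dvd q * ord z"
    proof (intro allI impI)
      fix q :: nat assume q: "Factorial_Ring.prime q" "q dvd ord w"
      have q1: "q > 1" using q(1) prime_gt_1_nat by blast
      have wq: "w [^] q \<in> group_center G" using center_pow_nat[OF less.prems] .
      have oq: "ord (w [^] q) = ord w div q" using ord_pow[OF wc q(2)] q1 by simp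
      have "ord w div q < ord w" using r0 q1 by simp
      then have "ord (w [^] q) dvd ord z" using less.hyps[OF _ wq] oq by simp
      then have "q * (ord w div q) dvd q * ord z" using oq by simp
      then show "ord w dvd q * ord z" using q(2) by simp
    qed
    obtain p where p: "Factorial_Ring.prime p" and rp: "ord w = p * gcd (ord w) (ord z)"
      and cop: "coprime (ord w) (ord z div gcd (ord w) (ord z))"
      using arith_key[OF r0 n0 nd H] by blast
    define g where "g = gcd (ord w) (ord z)"
    have gd: "g dvd ord z" by (simp add: g_def)
    have g0: "g \<noteq> 0" using r0 by (simp add: g_def)
    define z' where "z' = z [^] g"
    have z'Z: "z' \<in> group_center G" unfolding z'_def by (rule center_pow_nat[OF z])
    have z'c: "z' \<in> carrier G" using z'Z by (rule center_carrier)
    have oz': "ord z' = ord z div g" unfolding z'_def using ord_pow[OF zc gd g0] .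
    have comm: "w \<otimes> z' = z' \<otimes> w" using center_comm[OF less.prems z'c] .
    have o1: "ord (w \<otimes> z') = ord w * (ord z div g)"
      using ord_mult_coprime[OF wc z'c comm] cop oz' by (simp add: g_def)
    have rp': "ord w = p * g" using rp by (simp add: g_def)
    have "ord w * (ord z div g) = p * ord z" using rp' gd by (metis mult.assoc dvd_mult_div_cancel)
    then have ox: "ord (w \<otimes> z') = p * ord z" using o1 by simp
    have "w \<otimes> z' \<in> group_center G" by (rule subgroup.m_closed[OF center_subgroup less.prems z'Z])
    then have "p * ord z \<le> ord z" using mx ox by metis
    moreover have "p > 1" using p prime_gt_1_nat by blast
    ultimately show False using n0 by simp
  qed
qed

lemma (in group) exists_config:
  assumes fin: "finite (carrier G)"
    and nc: "\<forall>z\<in>group_center G. \<exists>w\<in>group_center G. w \<notin> range (\<lambda>i::int. z [^] i)"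
  shows "\<exists>a\<in>group_center G. \<exists>b\<in>group_center G.
           (\<forall>(i::int) (j::int). a [^] i = b [^] j \<longrightarrow> b [^] j = \<one>) \<and> (\<forall>k::int. a \<noteq> (a \<otimes> b) [^] k)"
proof -
  define Z where "Z = group_center G"
  have oneZ: "\<one> \<in> Z" unfolding Z_def by (rule subgroup.one_closed[OF center_subgroup])
  have bnd: "\<forall>y. y \<in> Z \<longrightarrow> ord y < order G + 1"
    using ord_le_group_order[OF fin] center_carrier by (auto simp: Z_def less_Suc_eq_le)
  obtain z where z: "z \<in> Z" and mx: "\<forall>y. y \<in> Z \<longrightarrow> ord y \<le> ord z"
    using ex_has_greatest_nat[of "\<lambda>y. y \<in> Z" \<one> ord "order G + 1", OF oneZ bnd] by blast
  have zc: "z \<in> carrier G" using z center_carrier by (simp add: Z_def)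
  define n where "n = ord z"
  have n0: "n > 0" using ord_ge_1[OF fin zc] by (simp add: n_def)
  define R where "R = range (\<lambda>i::int. z [^] i)"
  have inR: "z [^] i \<in> R" for i :: int by (simp add: R_def)
  have R1: "\<one> \<in> R" using inR[of 0] by simp
  have Rmul: "x \<otimes> y \<in> R" if "x \<in> R" "y \<in> R" for x y
    using that zc by (auto simp: R_def int_pow_mult[symmetric])
  have Rpow: "x [^] (j::int) \<in> R" if "x \<in> R" for x j
    using that zc by (auto simp: R_def int_pow_pow)
  have bez: "x \<in> R" if x: "x \<in> carrier G" and xi: "x [^] (i::int) \<in> R" and xj: "x [^] (j::int) \<in> R"
    and cij: "coprime i j" for x i j
  proof -
    obtain u v :: int where uv: "u * i + v * j = gcd i j" using bezout_int by blast
    then have uv1: "i * u + j * v = 1" using cij by (simp add: coprime_iff_gcd_eq_1 mult.commute)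
    have "x = x [^] (i * u + j * v)" using uv1 x by simp
    also have "\<dots> = (x [^] i) [^] u \<otimes> (x [^] j) [^] v" using x by (simp add: int_pow_mult int_pow_pow)
    finally have xe: "x = (x [^] i) [^] u \<otimes> (x [^] j) [^] v" .
    show ?thesis by (subst xe) (rule Rmul[OF Rpow[OF xi] Rpow[OF xj]])
  qed
  obtain w where w: "w \<in> Z" and wR: "w \<notin> R" using nc z by (auto simp: Z_def R_def)
  have wc: "w \<in> carrier G" using w center_carrier by (simp add: Z_def)
  define S where "S = {j::nat. 0 < j \<and> w [^] j \<in> R}"
  have "w [^] ord w = z [^] (0::int)" using wc by simp
  then have ordS: "ord w \<in> S" using ord_ge_1[OF fin wc] R1 by (auto simp: S_def)
  define k where "k = (LEAST j. j \<in> S)"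
  have kS: "k \<in> S" unfolding k_def using ordS by (rule LeastI)
  have kmin: "w [^] j \<notin> R" if "0 < j" "j < k" for j
    using not_less_Least[of j "\<lambda>j. j \<in> S"] that by (auto simp: S_def k_def)
  have k1: "k \<noteq> 1" using kS wR wc by (auto simp: S_def)
  obtain p where p: "Factorial_Ring.prime p" "p dvd k" using prime_factor_nat[OF k1] by blast
  have p1: "p > 1" using p(1) prime_gt_1_nat by blast
  have k0: "k > 0" using kS by (simp add: S_def)
  define d where "d = k div p"
  have kd: "k = d * p" using p(2) by (simp add: d_def)
  have d0: "0 < d" using k0 kd by (simp add: gr0I)
  have dk: "d < k" using kd d0 p1 by simp
  define v where "v = w [^] d"
  have vR: "v \<notin> R" unfolding v_def using kmin[OF d0 dk] .
  have vZ: "v \<in> Z" unfolding v_def Z_def using center_pow_nat w by (simp add: Z_def)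
  have vc: "v \<in> carrier G" using vZ center_carrier by (simp add: Z_def)
  have "v [^] p = w [^] k" unfolding v_def kd using wc by (simp add: nat_pow_pow)
  then have "v [^] (int p) \<in> R" using kS by (simp add: S_def int_pow_int)
  then obtain m :: int where vm: "v [^] (int p) = z [^] m" by (auto simp: R_def)
  have "ord v dvd n" unfolding n_def using max_ord_exp[OF fin, of z v] z mx vZ by (simp add: Z_def)
  then have vn: "v [^] n = \<one>" using pow_eq_id[OF vc] by simp
  have vnR: "v [^] (int n) \<in> R" using vn R1 by (simp add: int_pow_int)
  have pn: "p dvd n"
  proof (rule ccontr)
    assume "\<not> p dvd n"
    then have "coprime p n" using prime_imp_coprime[OF p(1)] by blast
    then have "coprime (int p) (int n)" by simp
    moreover have "v [^] (int p) \<in> R" using vm inR by simp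
    ultimately have "v \<in> R" using bez[OF vc _ vnR] by blast
    then show False using vR by simp
  qed
  define e where "e = n div p"
  have ne: "n = p * e" using pn by (simp add: e_def)
  have e0: "e > 0" using ne n0 by (simp add: gr0I)
  have "\<one> = v [^] (int p * int e)" using vn ne by (simp add: int_pow_int[symmetric])
  also have "\<dots> = (v [^] (int p)) [^] (int e)" using vc by (simp add: int_pow_pow)
  also have "\<dots> = z [^] (m * int e)" using vm zc by (simp add: int_pow_pow)
  finally have "z [^] (m * int e) = \<one>" by simp
  then have "int n dvd m * int e" using int_pow_eq_id[OF zc] by (simp add: n_def)
  then have "int p * int e dvd m * int e" using ne by simp
  then have pm: "int p dvd m" using e0 by (simp add: mult.commute)
  then obtain m' where mm: "m = int p * m'" by blast
  define u where "u = v \<otimes> inv (z [^] m')"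
  have zmZ: "z [^] m' \<in> Z" using center_pow z by (simp add: Z_def)
  have izmZ: "inv (z [^] m') \<in> Z" unfolding Z_def by (rule subgroup.m_inv_closed[OF center_subgroup zmZ[unfolded Z_def]])
  have uZ: "u \<in> Z" unfolding u_def Z_def by (rule subgroup.m_closed[OF center_subgroup vZ[unfolded Z_def] izmZ[unfolded Z_def]])
  have uc: "u \<in> carrier G" using uZ center_carrier by (simp add: Z_def)
  have zmc: "z [^] m' \<in> carrier G" using zc by simp
  have commv: "v \<otimes> inv (z [^] m') = inv (z [^] m') \<otimes> v" using center_comm[OF vZ[unfolded Z_def]] zmc by simp
  have up: "u [^] (int p) = \<one>"
  proof -
    have "u [^] (int p) = v [^] (int p) \<otimes> inv (z [^] m') [^] (int p)"
      unfolding u_def using int_pow_mult_distrib[OF commv vc] zmc by simp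
    also have "inv (z [^] m') [^] (int p) = inv (z [^] (m' * int p))"
      using zmc zc by (simp add: int_pow_inv int_pow_pow)
    also have "z [^] (m' * int p) = z [^] m" using mm by (simp add: mult.commute)
    finally show ?thesis using vm zc by simp
  qed
  have uR: "u \<notin> R"
  proof
    assume "u \<in> R"
    have "u \<otimes> z [^] m' = v" unfolding u_def using vc zmc by (simp add: m_assoc)
    moreover have "u \<otimes> z [^] m' \<in> R" using Rmul[OF \<open>u \<in> R\<close> inR] .
    ultimately show False using vR by simp
  qed
  have uj: "int p dvd j" if "u [^] (j::int) \<in> R" for j
  proof (rule ccontr)
    assume "\<not> int p dvd j"
    moreover have "Factorial_Ring.prime (int p)" using p(1) by simp
    ultimately have "coprime (int p) j" using prime_imp_coprime by blast
    moreover have "u [^] (int p) \<in> R" using up R1 by simp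
    ultimately have "u \<in> R" using bez[OF uc _ that] by blast
    then show False using uR by simp
  qed
  have uj1: "u [^] j = \<one>" if "int p dvd j" for j :: int
  proof -
    from that obtain t where jt: "j = int p * t" by (rule dvdE)
    have "u [^] j = (u [^] (int p)) [^] t" unfolding jt by (rule int_pow_pow[OF uc, symmetric])
    then show ?thesis using up by simp
  qed
  have AB: "\<forall>(i::int) (j::int). z [^] i = u [^] j \<longrightarrow> u [^] j = \<one>"
  proof (intro allI impI)
    fix i j :: int
    assume "z [^] i = u [^] j"
    then have "u [^] j \<in> R" using inR[of i] by simp
    then show "u [^] j = \<one>" using uj uj1 by blast
  qed
  have aC: "\<forall>k::int. z \<noteq> (z \<otimes> u) [^] k"
  proof
    fix k :: int
    show "z \<noteq> (z \<otimes> u) [^] k"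
    proof
      assume h: "z = (z \<otimes> u) [^] k"
      have commz: "z \<otimes> u = u \<otimes> z" using center_comm[OF z[unfolded Z_def] uc] .
      have zk: "z = z [^] k \<otimes> u [^] k" using h int_pow_mult_distrib[OF commz zc uc] by simp
      have "u [^] k = inv (z [^] k) \<otimes> z"
        using inv_solve_left[of "u [^] k" "z [^] k" z] zk zc uc by simp
      also have "\<dots> = z [^] (- k + 1)" using int_pow_mult[OF zc, of "-k" 1] zc by (simp add: int_pow_neg)
      finally have "u [^] k \<in> R" using inR by simp
      then have pk: "int p dvd k" by (rule uj)
      then have "u [^] k = \<one>" by (rule uj1)
      then have "z [^] (1::int) = z [^] k" using zk zc by simp
      then have "int n dvd k - 1" using int_pow_eq[OF zc] by (simp add: n_def)
      moreover have "int p dvd int n" using pn by simp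
      ultimately have "int p dvd k - 1" using dvd_trans by blast
      then have "int p dvd k - (k - 1)" using pk by (rule dvd_diff[rotated])
      then have "int p dvd 1" by simp
      then show False using p1 by simp
    qed
  qed
  show ?thesis using z uZ AB aC unfolding Z_def by blast
qed

lemma (in group) main_aux:
  assumes "finite (carrier G)" and "two_closed_group G"
  shows "cyclic_group (G\<lparr>carrier := group_center G\<rparr>)"
proof (rule ccontr)
  assume ncyc: "\<not> cyclic_group (G\<lparr>carrier := group_center G\<rparr>)"
  have sub: "subgroup (group_center G) G" by (rule center_subgroup)
  have gZ: "group (G\<lparr>carrier := group_center G\<rparr>)" by (rule subgroup.subgroup_is_group[OF sub is_group])
  have nc: "\<forall>z\<in>group_center G. \<exists>w\<in>group_center G. w \<notin> range (\<lambda>i::int. z [^] i)"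
  proof (intro ballI)
    fix z assume z: "z \<in> group_center G"
    show "\<exists>w\<in>group_center G. w \<notin> range (\<lambda>i::int. z [^] i)"
    proof (rule ccontr)
      assume "\<not> (\<exists>w\<in>group_center G. w \<notin> range (\<lambda>i::int. z [^] i))"
      then have all: "group_center G \<subseteq> range (\<lambda>i::int. z [^] i)" by blast
      have "range (\<lambda>i::int. z [^] i) \<subseteq> group_center G"
      proof
        fix x assume "x \<in> range (\<lambda>i::int. z [^] i)"
        then obtain i :: int where "x = z [^] i" by (rule rangeE)
        then show "x \<in> group_center G" using center_pow[OF z] by simp
      qed
      then have eq: "group_center G = range (\<lambda>i::int. z [^] i)" using all by (rule subset_antisym[rotated])
      have r: "range (\<lambda>i::int. z [^] i) = range (\<lambda>i::int. z [^]\<^bsub>G\<lparr>carrier := group_center G\<rparr>\<^esub> i)"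
        by (rule image_cong[OF refl int_pow_consistent[OF sub z]])
      have c0: "carrier (G\<lparr>carrier := group_center G\<rparr>) = group_center G" by simp
      have ceq: "carrier (G\<lparr>carrier := group_center G\<rparr>) = range (\<lambda>i::int. z [^]\<^bsub>G\<lparr>carrier := group_center G\<rparr>\<^esub> i)"
        using trans[OF trans[OF c0 eq] r] .
      have zc': "z \<in> carrier (G\<lparr>carrier := group_center G\<rparr>)" using z by simp
      have "cyclic_group (G\<lparr>carrier := group_center G\<rparr>)"
        unfolding group.cyclic_group[OF gZ] using zc' ceq by (rule bexI[rotated])
      then show False using ncyc by simp
    qed
  qed
  obtain a b where a: "a \<in> group_center G" and b: "b \<in> group_center G"
    and AB: "\<forall>(i::int) (j::int). a [^] i = b [^] j \<longrightarrow> b [^] j = \<one>"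
    and aC: "\<forall>k::int. a \<noteq> (a \<otimes> b) [^] k"
    using exists_config[OF assms(1) nc] by blast
  have "\<not> two_closed_group G" by (rule config_not_two_closed[OF assms(1) a b AB aC])
  then show False using assms(2) by simp
qed

theorem theorem1:
  fixes G :: "('a, 'b) monoid_scheme"
  assumes "group G" and "finite (carrier G)" and "two_closed_group G"
  shows "cyclic_group (G\<lparr>carrier := group_center G\<rparr>)"
  using group.main_aux[OF assms(1) assms(2) assms(3)] .

end
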